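(* Let $H$ be a graph on $h$ vertices with $\chi(H)=r\geq 3$ and $\gcd(H)=1$. Then for every sufficiently large integer $n$ there exists a balanced $r$-partite graph $G$ on $rn$ vertices with $\delta^*(G)\geq\left(1-\frac{1}{\chi^*(H)}\right)n-1=\left(1-\frac{1}{\chi_{\rm cr}(H)}\right)n-1$ that has no perfect $H$-tiling.
   Context: An $H$-tiling in $G$ is a collection of vertex-disjoint copies of $H$ in $G$; it is perfect if it covers every vertex of $G$. For an $r$-partite graph $G$ with vertex classes $V_1,\dots,V_r$, $G$ is balanced if all classes have the same size, and $\delta^*(G)$ is the largest integer $m$ such that for all $i\neq j$ every vertex of $V_i$ has at least $m$ neighbours in $V_j$. For $H$ with $\chi(H)=r$, let $\mathcal C$ be the set of proper $r$-colourings of $H$ with colour classes $X_1^\phi,\dots,X_r^\phi$, and $\mathcal D(H)=\bigcup_{\phi\in\mathcal C}\{|X_i^\phi|-|X_j^\phi|: i,j\in[r]\}$; $\gcd(H)$ is the greatest common divisor of the elements of $\mathcal D(H)$ if $\mathcal D(H)\ne\{0\}$ and $\infty$ otherwise. $\sigma(H)=\min_{\phi\in\mathcal C,\,i\in[r]}|X_i^\phi|/|V(H)|$, $\chi_{\rm cr}(H)=(\chi(H)-1)/(1-\sigma(H))$, and $\chi^*(H)=\chi_{\rm cr}(H)$ when $\gcd(H)=1$. *)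

theory Defs
  imports Complex_Main
begin

definition is_graph :: "'a set \<Rightarrow> ('a \<Rightarrow> 'a \<Rightarrow> bool) \<Rightarrow> bool" where
  "is_graph V E \<longleftrightarrow> finite V \<and> (\<forall>u v. E u v \<longrightarrow> u \<in> V \<and> v \<in> V)
     \<and> (\<forall>u v. E u v \<longrightarrow> E v u) \<and> (\<forall>v. \<not> E v v)"

definition proper_colouring :: "'a set \<Rightarrow> ('a \<Rightarrow> 'a \<Rightarrow> bool) \<Rightarrow> nat \<Rightarrow> ('a \<Rightarrow> nat) \<Rightarrow> bool" where
  "proper_colouring V E k \<phi> \<longleftrightarrow> (\<forall>v\<in>V. \<phi> v < k) \<and> (\<forall>u\<in>V. \<forall>v\<in>V. E u v \<longrightarrow> \<phi> u \<noteq> \<phi> v)"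

definition chromatic_number :: "'a set \<Rightarrow> ('a \<Rightarrow> 'a \<Rightarrow> bool) \<Rightarrow> nat" where
  "chromatic_number V E = (LEAST k. \<exists>\<phi>. proper_colouring V E k \<phi>)"

definition colour_class :: "'a set \<Rightarrow> ('a \<Rightarrow> nat) \<Rightarrow> nat \<Rightarrow> 'a set" where
  "colour_class V \<phi> i = {v \<in> V. \<phi> v = i}"

definition diff_set :: "'a set \<Rightarrow> ('a \<Rightarrow> 'a \<Rightarrow> bool) \<Rightarrow> int set" where
  "diff_set V E = {int (card (colour_class V \<phi> i)) - int (card (colour_class V \<phi> j)) | \<phi> i j.
      proper_colouring V E (chromatic_number V E) \<phi> \<and> i < chromatic_number V E \<and> j < chromatic_number V E}"

definition gcd_is_one :: "'a set \<Rightarrow> ('a \<Rightarrow> 'a \<Rightarrow> bool) \<Rightarrow> bool" where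
  "gcd_is_one V E \<longleftrightarrow> diff_set V E \<noteq> {0} \<and> Gcd (diff_set V E) = 1"

definition sigma :: "'a set \<Rightarrow> ('a \<Rightarrow> 'a \<Rightarrow> bool) \<Rightarrow> real" where
  "sigma V E = real (Min {card (colour_class V \<phi> i) | \<phi> i.
      proper_colouring V E (chromatic_number V E) \<phi> \<and> i < chromatic_number V E}) / real (card V)"

definition chi_cr :: "'a set \<Rightarrow> ('a \<Rightarrow> 'a \<Rightarrow> bool) \<Rightarrow> real" where
  "chi_cr V E = (real (chromatic_number V E) - 1) / (1 - sigma V E)"

definition part_class :: "nat \<Rightarrow> nat \<Rightarrow> (nat \<times> nat) set" where
  "part_class n i = {i} \<times> {0..<n}"

definition balanced_rpartite :: "nat \<Rightarrow> nat \<Rightarrow> (nat \<times> nat \<Rightarrow> nat \<times> nat \<Rightarrow> bool) \<Rightarrow> bool" where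
  "balanced_rpartite r n E \<longleftrightarrow> is_graph ({0..<r} \<times> {0..<n}) E
     \<and> (\<forall>i<r. \<forall>u\<in>part_class n i. \<forall>v\<in>part_class n i. \<not> E u v)"

definition delta_star :: "nat \<Rightarrow> nat \<Rightarrow> (nat \<times> nat \<Rightarrow> nat \<times> nat \<Rightarrow> bool) \<Rightarrow> nat" where
  "delta_star r n E = Min {card {u \<in> part_class n j. E v u} | v i j.
      i < r \<and> j < r \<and> i \<noteq> j \<and> v \<in> part_class n i}"

definition embeds :: "'a set \<Rightarrow> ('a \<Rightarrow> 'a \<Rightarrow> bool) \<Rightarrow> 'b set \<Rightarrow> ('b \<Rightarrow> 'b \<Rightarrow> bool) \<Rightarrow> ('a \<Rightarrow> 'b) \<Rightarrow> bool" where
  "embeds VH EH VG EG f \<longleftrightarrow> inj_on f VH \<and> f ` VH \<subseteq> VG \<and> (\<forall>u\<in>VH. \<forall>v\<in>VH. EH u v \<longrightarrow> EG (f u) (f v))"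

definition perfect_tiling :: "'a set \<Rightarrow> ('a \<Rightarrow> 'a \<Rightarrow> bool) \<Rightarrow> 'b set \<Rightarrow> ('b \<Rightarrow> 'b \<Rightarrow> bool) \<Rightarrow> bool" where
  "perfect_tiling VH EH VG EG \<longleftrightarrow> (\<exists>T. (\<forall>f\<in>T. embeds VH EH VG EG f)
     \<and> (\<forall>f\<in>T. \<forall>g\<in>T. f ` VH \<noteq> g ` VH \<longrightarrow> f ` VH \<inter> g ` VH = {})
     \<and> (\<Union>f\<in>T. f ` VH) = VG)"

end

theory Submission
  imports Defs
begin

definition partf :: "nat \<Rightarrow> nat \<Rightarrow> nat \<Rightarrow> nat" where
  "partf r c t = (if t < (r-1)*c then t div c else r-1)"

lemma partf_lt: assumes "c > 0" "r \<ge> 1" shows "partf r c t < r"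
proof (cases "t < (r-1)*c")
  case True
  hence "t div c < r - 1" using assms by (simp add: div_less_iff_less_mult)
  thus ?thesis using True assms unfolding partf_def by auto
qed (use assms in \<open>auto simp: partf_def\<close>)

lemma fiber_card:
  assumes "c > 0" "r \<ge> 1" "n \<le> r*c"
  shows "card {s\<in>{0..<n}. partf r c s = k} \<le> c"
proof (cases "k < r - 1")
  case True
  have "{s\<in>{0..<n}. partf r c s = k} \<subseteq> {k*c..<k*c+c}"
  proof
    fix s assume "s \<in> {s\<in>{0..<n}. partf r c s = k}"
    hence s: "s < n" "partf r c s = k" by auto
    have "s < (r-1)*c" using s True unfolding partf_def by (auto split: if_splits)
    hence "s div c = k" using s unfolding partf_def by auto
    moreover have "s = s div c * c + s mod c" by simp
    moreover have "s mod c < c" using assms(1) by simp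
    ultimately show "s \<in> {k*c..<k*c+c}" by (metis atLeastLessThan_iff le_add1 add_less_cancel_left)
  qed
  hence "card {s\<in>{0..<n}. partf r c s = k} \<le> card {k*c..<k*c+c}" by (intro card_mono) auto
  thus ?thesis by simp
next
  case False
  have "{s\<in>{0..<n}. partf r c s = k} \<subseteq> {(r-1)*c..<n}"
  proof
    fix s assume "s \<in> {s\<in>{0..<n}. partf r c s = k}"
    hence s: "s < n" "partf r c s = k" by auto
    have "\<not> s < (r-1)*c"
    proof
      assume "s < (r-1)*c"
      hence "s div c < r - 1" by (simp add: div_less_iff_less_mult assms(1))
      thus False using s False \<open>s < (r-1)*c\<close> unfolding partf_def by auto
    qed
    thus "s \<in> {(r-1)*c..<n}" using s by auto
  qed
  hence "card {s\<in>{0..<n}. partf r c s = k} \<le> card {(r-1)*c..<n}" by (intro card_mono) auto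
  also have "\<dots> \<le> c" using assms by (simp add: diff_mult_distrib) 
  finally show ?thesis .
qed

lemma last_fiber:
  assumes "c > 0" "r \<ge> 1" "(r-1)*c \<le> n"
  shows "{s\<in>{0..<n}. partf r c s = r-1} = {(r-1)*c..<n}"
proof -
  have d: "s div c < r - 1" if "s < (r-1)*c" for s using that assms(1) by (simp add: div_less_iff_less_mult)
  show ?thesis
  proof (rule set_eqI, rule iffI)
    fix s assume "s \<in> {s\<in>{0..<n}. partf r c s = r-1}"
    hence "s < n" "partf r c s = r - 1" by auto
    moreover have "\<not> s < (r-1)*c" using d[of s] \<open>partf r c s = r - 1\<close> unfolding partf_def by (auto split: if_splits)
    ultimately show "s \<in> {(r-1)*c..<n}" by auto
  next
    fix s assume "s \<in> {(r-1)*c..<n}"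
    thus "s \<in> {s\<in>{0..<n}. partf r c s = r-1}" unfolding partf_def by auto
  qed
qed

definition EGc :: "nat \<Rightarrow> nat \<Rightarrow> nat \<Rightarrow> nat \<times> nat \<Rightarrow> nat \<times> nat \<Rightarrow> bool" where
  "EGc r n c u v = (fst u < r \<and> fst v < r \<and> snd u < n \<and> snd v < n \<and> fst u \<noteq> fst v
      \<and> partf r c (snd u) \<noteq> partf r c (snd v))"

lemma EGc_balanced: "balanced_rpartite r n (EGc r n c)"
  unfolding balanced_rpartite_def is_graph_def EGc_def part_class_def by auto

lemma EGc_delta:
  assumes "c > 0" "r \<ge> 2" "n \<ge> 1" "n \<le> r*c"
  shows "n - c \<le> delta_star r n (EGc r n c)"
proof -
  let ?S = "{card {u \<in> part_class n j. EGc r n c v u} | v i j.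
      i < r \<and> j < r \<and> i \<noteq> j \<and> v \<in> part_class n i}"
  have bnd: "n - c \<le> card {u \<in> part_class n j. EGc r n c v u}"
    if hh: "i < r" "j < r" "i \<noteq> j" "v \<in> part_class n i" for v i j
  proof -
    obtain t where v: "v = (i,t)" "t < n" using hh(4) unfolding part_class_def by auto
    have eq: "{u \<in> part_class n j. EGc r n c v u} = {j} \<times> ({0..<n} - {s\<in>{0..<n}. partf r c s = partf r c t})"
      using hh v unfolding part_class_def EGc_def by auto
    have "card ({0..<n} - {s\<in>{0..<n}. partf r c s = partf r c t}) = n - card {s\<in>{0..<n}. partf r c s = partf r c t}"
      by (subst card_Diff_subset) auto
    moreover have "card {s\<in>{0..<n}. partf r c s = partf r c t} \<le> c"
      using fiber_card[of c r n] assms by simp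
    ultimately show ?thesis unfolding eq by (simp add: card_cartesian_product)
  qed
  have sub: "?S \<subseteq> {0..n}"
  proof
    fix x assume "x \<in> ?S"
    then obtain v i j where x: "x = card {u \<in> part_class n j. EGc r n c v u}" by blast
    have "x \<le> card (part_class n j)" unfolding x by (rule card_mono) (auto simp: part_class_def)
    thus "x \<in> {0..n}" by (simp add: part_class_def card_cartesian_product)
  qed
  have fin: "finite ?S" using finite_subset[OF sub] by simp
  have ne: "card {u \<in> part_class n 1. EGc r n c (0,0) u} \<in> ?S"
  proof -
    have "(0::nat) < r \<and> (1::nat) < r \<and> (0::nat) \<noteq> 1 \<and> ((0::nat),(0::nat)) \<in> part_class n 0"
      using assms by (auto simp: part_class_def)
    thus ?thesis by blast
  qed
  have "Min ?S \<in> ?S" using fin ne by (intro Min_in) auto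
  then obtain v i j where "Min ?S = card {u \<in> part_class n j. EGc r n c v u}"
      "i < r \<and> j < r \<and> i \<noteq> j \<and> v \<in> part_class n i" by blast
  thus ?thesis using bnd unfolding delta_star_def by metis
qed

lemma EGc_notiling:
  assumes fin: "finite VH" and h: "card VH = h" and "c > 0" "r \<ge> 1" "(r-1)*c \<le> n"
    and key: "\<And>\<phi>. proper_colouring VH EH r \<phi> \<Longrightarrow> m \<le> card (colour_class VH \<phi> (r-1))"
    and ineq: "h * (n - (r-1)*c) < m * n"
  shows "\<not> perfect_tiling VH EH ({0..<r} \<times> {0..<n}) (EGc r n c)"
proof
  let ?VG = "{0..<r} \<times> {0..<n}"
  assume "perfect_tiling VH EH ?VG (EGc r n c)"
  then obtain T where T: "(\<forall>f\<in>T. embeds VH EH ?VG (EGc r n c) f)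
    \<and> (\<forall>f\<in>T. \<forall>g\<in>T. f ` VH \<noteq> g ` VH \<longrightarrow> f ` VH \<inter> g ` VH = {})
    \<and> (\<Union>f\<in>T. f ` VH) = ?VG" unfolding perfect_tiling_def by (elim exE) (erule that)
  have T1: "\<forall>f\<in>T. embeds VH EH ?VG (EGc r n c) f" using T by (rule conjunct1)
  have T2: "\<forall>f\<in>T. \<forall>g\<in>T. f ` VH \<noteq> g ` VH \<longrightarrow> f ` VH \<inter> g ` VH = {}" using T by blast
  have T3: "(\<Union>f\<in>T. f ` VH) = ?VG" using T by (elim conjE)
  define I where "I = (\<lambda>f. f ` VH) ` T"
  have Isub: "I \<subseteq> Pow ?VG" using T3 unfolding I_def by blast
  have finI: "finite I" by (rule finite_subset[OF Isub]) auto
  have disj: "\<forall>S\<in>I. \<forall>S'\<in>I. S \<noteq> S' \<longrightarrow> S \<inter> S' = {}" using T2 unfolding I_def by auto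
  have finS: "finite S" if SI: "S \<in> I" for S
  proof -
    have "S \<subseteq> ?VG" using Isub SI by auto
    thus ?thesis by (rule finite_subset) simp
  qed
  have cardS: "card S = h" if SI: "S \<in> I" for S
  proof -
    obtain f where f: "f \<in> T" "S = f ` VH" using SI unfolding I_def by auto
    have "inj_on f VH" using T1 f(1) unfolding embeds_def by blast
    thus ?thesis using h f(2) by (simp add: card_image)
  qed
  have UI: "\<Union>I = ?VG" using T3 unfolding I_def by auto
  have "r * n = card ?VG" by simp
  also have "\<dots> = card (\<Union>S\<in>I. S)" using UI by simp
  also have "\<dots> = (\<Sum>S\<in>I. card S)"
    by (rule card_UN_disjoint) (use finI disj finS in auto)
  also have "\<dots> = card I * h" using cardS by simp
  finally have rn: "r * n = card I * h" .
  define P where "P = {v \<in> ?VG. partf r c (snd v) = r - 1}"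
  have Peq: "P = {0..<r} \<times> {s\<in>{0..<n}. partf r c s = r-1}" unfolding P_def by auto
  have cardP: "card P = r * (n - (r-1)*c)"
    unfolding Peq using last_fiber[of c r n] assms by (simp add: card_cartesian_product)
  have PU: "P = (\<Union>S\<in>I. S \<inter> P)" using UI unfolding P_def by auto
  have "card P = (\<Sum>S\<in>I. card (S \<inter> P))"
    apply (subst PU)
    by (rule card_UN_disjoint) (use finI disj finS in auto)
  note cP = this
  have mS: "m \<le> card (S \<inter> P)" if SI: "S \<in> I" for S
  proof -
    obtain f where f: "f \<in> T" "S = f ` VH" using SI unfolding I_def by auto
    have emb: "inj_on f VH" "f ` VH \<subseteq> ?VG" "\<forall>u\<in>VH. \<forall>v\<in>VH. EH u v \<longrightarrow> EGc r n c (f u) (f v)"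
      using T1 f(1) unfolding embeds_def by auto
    define \<phi> where "\<phi> = (\<lambda>a. partf r c (snd (f a)))"
    have "proper_colouring VH EH r \<phi>"
      unfolding proper_colouring_def \<phi>_def using emb(3) partf_lt[OF assms(3,4)] unfolding EGc_def by blast
    hence "m \<le> card (colour_class VH \<phi> (r-1))" by (rule key)
    also have "card (colour_class VH \<phi> (r-1)) = card (f ` colour_class VH \<phi> (r-1))"
      by (rule card_image[symmetric]) (rule inj_on_subset[OF emb(1)], auto simp: colour_class_def)
    also have "f ` colour_class VH \<phi> (r-1) = S \<inter> P"
      using emb(2) unfolding f(2) colour_class_def \<phi>_def P_def by auto
    finally show ?thesis .
  qed
  have "card I * m \<le> card P"
  proof -
    have "(\<Sum>S\<in>I. m) \<le> (\<Sum>S\<in>I. card (S \<inter> P))" using mS by (rule sum_mono)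
    thus ?thesis using cP by simp
  qed
  hence "card I * m * h \<le> card P * h" by simp
  hence "r * n * m \<le> card P * h" using rn by (metis mult.commute mult.assoc)
  moreover have "card P * h < r * n * m"
  proof -
    have "h * (n - (r-1)*c) * r < m * n * r" using ineq assms(4) by simp
    thus ?thesis unfolding cardP by (metis mult.commute mult.assoc)
  qed
  ultimately show False by simp
qed

lemma chrom_exists:
  assumes "is_graph V E" shows "\<exists>\<phi>. proper_colouring V E (chromatic_number V E) \<phi>"
proof -
  have fin: "finite V" using assms unfolding is_graph_def by auto
  obtain k :: nat and f where kf: "V = f ` {i. i<k}" "inj_on f {i. i<k}"
    using finite_imp_nat_seg_image_inj_on[OF fin] by blast
  define \<phi> where "\<phi> = inv_into {i. i<k} f"
  have "proper_colouring V E k \<phi>"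
    unfolding proper_colouring_def
  proof (intro conjI ballI impI)
    fix v assume "v \<in> V" thus "\<phi> v < k" unfolding \<phi>_def using kf inv_into_into[of v f "{i. i<k}"] by auto
  next
    fix u v assume uv: "u \<in> V" "v \<in> V" "E u v"
    have "u \<noteq> v" using assms uv(3) unfolding is_graph_def by auto
    moreover have "f (\<phi> u) = u" "f (\<phi> v) = v" unfolding \<phi>_def using uv kf by (auto intro: f_inv_into_f)
    ultimately show "\<phi> u \<noteq> \<phi> v" by metis
  qed
  hence "\<exists>k \<phi>. proper_colouring V E k \<phi>" by blast
  hence "\<exists>\<phi>. proper_colouring V E (LEAST k. \<exists>\<phi>. proper_colouring V E k \<phi>) \<phi>" by (rule LeastI_ex)
  thus ?thesis unfolding chromatic_number_def .
qed

lemma chrom_min: "k < chromatic_number V E \<Longrightarrow> \<not> proper_colouring V E k \<phi>"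
  unfolding chromatic_number_def using not_less_Least by blast

lemma class_nonempty:
  assumes "proper_colouring V E (chromatic_number V E) \<phi>" "i < chromatic_number V E"
  shows "colour_class V \<phi> i \<noteq> {}"
proof
  assume emp: "colour_class V \<phi> i = {}"
  let ?k = "chromatic_number V E"
  have ni: "\<phi> v \<noteq> i" if "v \<in> V" for v using emp that unfolding colour_class_def by auto
  define \<psi> where "\<psi> = (\<lambda>v. if \<phi> v = ?k - 1 then i else \<phi> v)"
  have "proper_colouring V E (?k - 1) \<psi>"
    unfolding proper_colouring_def
  proof (intro conjI ballI impI)
    fix v assume v: "v \<in> V"
    have "\<phi> v < ?k" using assms(1) v unfolding proper_colouring_def by auto
    thus "\<psi> v < ?k - 1" using ni[OF v] assms(2) unfolding \<psi>_def by auto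
  next
    fix u v assume uv: "u \<in> V" "v \<in> V" "E u v"
    have "\<phi> u \<noteq> \<phi> v" using assms(1) uv unfolding proper_colouring_def by auto
    thus "\<psi> u \<noteq> \<psi> v" using ni[OF uv(1)] ni[OF uv(2)] unfolding \<psi>_def by auto
  qed
  moreover have "?k - 1 < ?k" using assms(2) by simp
  ultimately show False using chrom_min by blast
qed

lemma real_part:
  fixes r h m n :: nat and x :: real
  assumes r: "r \<ge> 3" and hm: "r * m \<le> h" and m: "m > 0" and n: "n \<ge> r * h"
    and x: "x = real n * (real h - real m) / (real h * (real r - 1))"
    and c: "x < real c" "real c \<le> x + 1"
  shows "(r-1)*c \<le> n" "n \<le> r*c" "h * (n - (r-1)*c) < m * n"
proof -
  have "r * m > 0" using m r by simp
  hence "h > 0" using hm by linarith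
  hence h0: "real h > 0" by simp
  have r1: "real r - 1 > 0" using r by simp
  have xr: "(real r - 1) * x = real n * (real h - real m) / real h" using x r1 h0 by (simp add: field_simps)
  have hmr: "real r * real m \<le> real h" using hm by (metis of_nat_le_iff of_nat_mult)
  have nr: "real n \<ge> real r * real h" using n by (metis of_nat_le_iff of_nat_mult)
  have "(real r - 1) * real c \<le> (real r - 1) * (x + 1)" using c(2) r1 by simp
  also have "\<dots> = real n - real n * real m / real h + (real r - 1)" using xr h0 by (simp add: field_simps)
  also have "\<dots> \<le> real n"
  proof -
    have "real n * real m \<ge> real r * real h * 1" using nr m by (intro mult_mono) auto
    hence "real n * real m / real h \<ge> real r" using h0 by (simp add: field_simps)
    thus ?thesis by simp
  qed
  finally have a: "(real r - 1) * real c \<le> real n" .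
  have rc: "real ((r-1)*c) = (real r - 1) * real c" using r by (simp add: of_nat_diff)
  show "(r-1)*c \<le> n" using a unfolding rc[symmetric] by (simp only: of_nat_le_iff)
  have "real n \<le> real r * x"
  proof -
    have "real n * (real h * (real r - 1)) \<le> real n * (real r * (real h - real m))"
      using hmr by (intro mult_left_mono) (auto simp: algebra_simps)
    hence "real n * (real h * (real r - 1)) / (real h * (real r - 1)) \<le> real n * (real r * (real h - real m)) / (real h * (real r - 1))"
      using h0 r1 by (intro divide_right_mono) auto
    moreover have "real n * (real h * (real r - 1)) / (real h * (real r - 1)) = real n" using h0 r1 by simp
    moreover have "real r * x = real n * (real r * (real h - real m)) / (real h * (real r - 1))" using x by simp
    ultimately show ?thesis by simp
  qed
  also have "\<dots> < real r * real c" using c(1) r by simp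
  finally have "real n < real (r * c)" by simp
  thus "n \<le> r*c" by (simp only: of_nat_less_iff)
  have "real h * (real r - 1) * x < real h * (real r - 1) * real c" using c(1) h0 r1 by simp
  hence "real n * (real h - real m) < real h * ((real r - 1) * real c)" using xr h0 by (simp add: field_simps)
  hence "real h * (real n - (real r - 1) * real c) < real m * real n" by (simp add: algebra_simps)
  moreover have "real (n - (r-1)*c) = real n - (real r - 1) * real c"
    using \<open>(r-1)*c \<le> n\<close> r by (simp add: of_nat_diff)
  ultimately have "real (h * (n - (r-1)*c)) < real (m * n)" by simp
  thus "h * (n - (r-1)*c) < m * n" by (simp only: of_nat_less_iff)
qed

theorem mainTheorem9:
  fixes VH :: "'a set" and EH :: "'a \<Rightarrow> 'a \<Rightarrow> bool"
  assumes "is_graph VH EH"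
    and "chromatic_number VH EH \<ge> 3"
    and "gcd_is_one VH EH"
  shows "\<exists>N. \<forall>n\<ge>N. \<exists>EG. balanced_rpartite (chromatic_number VH EH) n EG
     \<and> real (delta_star (chromatic_number VH EH) n EG) \<ge> (1 - 1 / chi_cr VH EH) * real n - 1
     \<and> \<not> perfect_tiling VH EH ({0..<chromatic_number VH EH} \<times> {0..<n}) EG"
proof -
  let ?r = "chromatic_number VH EH"
  have r3: "?r \<ge> 3" using assms(2) .
  have fin: "finite VH" using assms(1) unfolding is_graph_def by auto
  obtain \<phi>0 where \<phi>0: "proper_colouring VH EH ?r \<phi>0" using chrom_exists[OF assms(1)] by blast
  define S where "S = {card (colour_class VH \<phi> i) | \<phi> i. proper_colouring VH EH ?r \<phi> \<and> i < ?r}"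
  define h where "h = card VH"
  have Ssub: "S \<subseteq> {0..h}"
  proof
    fix x assume "x \<in> S"
    then obtain \<phi> i where "x = card (colour_class VH \<phi> i)" unfolding S_def by blast
    moreover have "card (colour_class VH \<phi> i) \<le> h" unfolding h_def colour_class_def
      by (rule card_mono[OF fin]) auto
    ultimately show "x \<in> {0..h}" by simp
  qed
  have finS: "finite S" using finite_subset[OF Ssub] by simp
  have inS: "card (colour_class VH \<phi> i) \<in> S" if pi: "proper_colouring VH EH ?r \<phi>" "i < ?r" for \<phi> i
    unfolding S_def using pi by blast
  have neS: "card (colour_class VH \<phi>0 0) \<in> S" using inS \<phi>0 r3 by simp
  define m where "m = Min S"
  have mS: "m \<in> S" unfolding m_def using finS neS by (intro Min_in) auto
  have m0: "m > 0"
  proof -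
    obtain \<phi> i where mi: "m = card (colour_class VH \<phi> i)" "proper_colouring VH EH ?r \<phi>" "i < ?r"
      using mS unfolding S_def by blast
    have "colour_class VH \<phi> i \<noteq> {}" using class_nonempty[OF mi(2,3)] .
    moreover have "finite (colour_class VH \<phi> i)" using fin unfolding colour_class_def by auto
    ultimately show ?thesis using mi(1) by (simp add: card_gt_0_iff)
  qed
  have key: "m \<le> card (colour_class VH \<phi> (?r-1))" if p: "proper_colouring VH EH ?r \<phi>" for \<phi>
  proof -
    have "card (colour_class VH \<phi> (?r-1)) \<in> S" using inS p r3 by simp
    thus ?thesis unfolding m_def by (rule Min_le[OF finS])
  qed
  have rm: "?r * m \<le> h"
  proof -
    have U: "VH = (\<Union>i\<in>{..<?r}. colour_class VH \<phi>0 i)"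
      using \<phi>0 unfolding proper_colouring_def colour_class_def by auto
    have "h = (\<Sum>i\<in>{..<?r}. card (colour_class VH \<phi>0 i))"
      unfolding h_def
      apply (subst U)
      by (rule card_UN_disjoint) (use fin in \<open>auto simp: colour_class_def\<close>)
    moreover have "(\<Sum>i\<in>{..<?r}. m) \<le> (\<Sum>i\<in>{..<?r}. card (colour_class VH \<phi>0 i))"
    proof (rule sum_mono)
      fix i assume "i \<in> {..<?r}"
      hence "card (colour_class VH \<phi>0 i) \<in> S" using inS \<phi>0 by simp
      thus "m \<le> card (colour_class VH \<phi>0 i)" unfolding m_def by (rule Min_le[OF finS])
    qed
    ultimately show ?thesis by simp
  qed
  have "?r * m > 0" using m0 r3 by simp
  hence h0: "h > 0" using rm by linarith
  have sig: "sigma VH EH = real m / real h" unfolding sigma_def m_def S_def h_def ..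
  have chi: "1 / chi_cr VH EH = (1 - real m / real h) / (real ?r - 1)"
    unfolding chi_cr_def sig by simp
  show ?thesis
  proof (rule exI[of _ "?r * h"], intro allI impI)
    fix n assume n: "?r * h \<le> n"
    define x where "x = real n * (real h - real m) / (real h * (real ?r - 1))"
    define c where "c = nat \<lfloor>x\<rfloor> + 1"
    have "m \<le> ?r * m" using r3 by simp
    hence mh: "m \<le> h" using rm by linarith
    have x0: "x \<ge> 0" unfolding x_def using mh r3 h0 by (intro divide_nonneg_pos mult_nonneg_nonneg mult_pos_pos) auto
    have cx: "real c = of_int \<lfloor>x\<rfloor> + 1" unfolding c_def using x0 by simp
    have c1: "x < real c" "real c \<le> x + 1" unfolding cx by linarith+
    note rp = real_part[OF r3 rm m0 n x_def c1]
    have cpos: "c > 0" unfolding c_def by simp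
    have r1: "?r \<ge> 1" "?r \<ge> 2" using r3 by auto
    have "?r * h > 0" using h0 r3 by simp
    hence n1: "n \<ge> 1" using n by linarith
    show "\<exists>EG. balanced_rpartite ?r n EG
     \<and> real (delta_star ?r n EG) \<ge> (1 - 1 / chi_cr VH EH) * real n - 1
     \<and> \<not> perfect_tiling VH EH ({0..<?r} \<times> {0..<n}) EG"
    proof (intro exI conjI)
      show "balanced_rpartite ?r n (EGc ?r n c)" by (rule EGc_balanced)
      show "\<not> perfect_tiling VH EH ({0..<?r} \<times> {0..<n}) (EGc ?r n c)"
        by (rule EGc_notiling[OF fin h_def[symmetric] cpos r1(1) rp(1) key rp(3)])
      have d: "n - c \<le> delta_star ?r n (EGc ?r n c)" by (rule EGc_delta[OF cpos r1(2) n1 rp(2)])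
      have "1 \<le> ?r - 1" using r3 by simp
      hence "1 * c \<le> (?r - 1) * c" by (rule mult_le_mono1)
      hence "c \<le> (?r - 1) * c" by simp
      hence cn: "c \<le> n" using rp(1) by linarith
      have "(1 - 1 / chi_cr VH EH) * real n - 1 = real n - x - 1"
        unfolding chi x_def using h0 r3 by (simp add: field_simps)
      also have "\<dots> \<le> real (n - c)" using c1 cn by (simp add: of_nat_diff)
      also have "\<dots> \<le> real (delta_star ?r n (EGc ?r n c))" using d by simp
      finally show "real (delta_star ?r n (EGc ?r n c)) \<ge> (1 - 1 / chi_cr VH EH) * real n - 1" .
    qed
  qed
qed

end
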